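(* Let $\mathbb{F}_2=\langle a\rangle\ast\langle b\rangle$ and let $f=f_A\ast f_B$ be a split quasimorphism with bounded factors $f_A:\langle a\rangle\to\mathbb{R}$, $f_B:\langle b\rangle\to\mathbb{R}$. For $n\in\mathbb{Z}\setminus\{0\}$ let $\tau_n$ be the automorphism $a\mapsto a$, $b\mapsto a^nb$. Then the following are equivalent: (i) $\tau_n.f=f$; (ii) $\tau_n.\widehat f=\widehat f$; (iii) $\tau_n.\omega_f=\omega_f$; (iv) the function $f_A$ is $|n|$-periodic and $f_B$ is identically zero. Furthermore, if $|n|\leq 2$ these conditions imply $f=0$.
   Context: $f_A,f_B$ are alternating ($f(x^{-1})=-f(x)$). Each non-trivial element of $\mathbb{F}_2$ has a unique normal form $a^{k_1}b^{l_1}\cdots a^{k_m}b^{l_m}$ with all exponents non-zero except possibly $k_1$ or $l_m$, and $f(1)=0$, $f(a^{k_1}b^{l_1}\cdots a^{k_m}b^{l_m})=f_A(a^{k_1})+f_B(b^{l_1})+\dots+f_A(a^{k_m})+f_B(b^{l_m})$ (with $f_A(1)=f_B(1)=0$). The action of automorphisms on functions is $\tau.f=f\circ\tau^{-1}$; $\widehat f(g)=\lim_{k\to\infty}f(g^k)/k$ is the homogenization; $\omega_f\in\mathrm{H}^2_\mathrm{b}(\mathbb{F}_2,\mathbb{R})$ is the bounded class of $\partial f(g,h)=f(g)+f(h)-f(gh)$, and $\tau.\omega_f=\omega_{\tau.f}$. $f_A$ is $|n|$-periodic means $f_A(a^{k+n})=f_A(a^k)$ for all $k\in\mathbb{Z}$.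 *)

theory Defs
  imports Complex_Main
begin

text \<open>A syllable (g,k) stands for a^k if g = False and b^k if g = True.
  A normal form is a list of syllables with non-zero exponents and
  alternating generators.\<close>

fun reduced :: "(bool \<times> int) list \<Rightarrow> bool" where
  "reduced [] = True"
| "reduced [(g,k)] = (k \<noteq> 0)"
| "reduced ((g,k) # (h,l) # r) = (k \<noteq> 0 \<and> g \<noteq> h \<and> reduced ((h,l) # r))"

fun cons_syl :: "bool \<times> int \<Rightarrow> (bool \<times> int) list \<Rightarrow> (bool \<times> int) list" where
  "cons_syl (g,k) [] = (if k = 0 then [] else [(g,k)])"
| "cons_syl (g,k) ((h,l) # r) =
     (if k = 0 then (h,l) # r
      else if g = h then (if k + l = 0 then r else (g, k + l) # r)
      else (g,k) # (h,l) # r)"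

lemma reduced_tl: "reduced (x # r) \<Longrightarrow> reduced r"
  by (cases x; cases r rule: reduced.cases) auto

lemma reduced_cons_syl: "reduced ws \<Longrightarrow> reduced (cons_syl s ws)"
proof (cases s)
  case (Pair g k)
  assume r: "reduced ws"
  show ?thesis
  proof (cases ws)
    case Nil then show ?thesis using Pair by simp
  next
    case (Cons x rest)
    obtain h l where x: "x = (h,l)" by (cases x)
    show ?thesis
    proof (cases rest)
      case Nil then show ?thesis using r Pair Cons x by auto
    next
      case (Cons y rest')
      obtain h' l' where y: "y = (h',l')" by (cases y)
      show ?thesis using r Pair \<open>ws = x # rest\<close> Cons x y
        by (auto dest: reduced_tl)
    qed
  qed
qed

definition mul_list :: "(bool \<times> int) list \<Rightarrow> (bool \<times> int) list \<Rightarrow> (bool \<times> int) list" where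
  "mul_list xs ys = foldr cons_syl xs ys"

lemma reduced_mul_list: "reduced ys \<Longrightarrow> reduced (mul_list xs ys)"
  unfolding mul_list_def by (induction xs) (auto intro: reduced_cons_syl)

definition inv_list :: "(bool \<times> int) list \<Rightarrow> (bool \<times> int) list" where
  "inv_list xs = mul_list (rev (map (\<lambda>(g,k). (g, -k)) xs)) []"

typedef fg2 = "{ws. reduced ws}"
  by (rule exI[of _ "[]"]) simp

setup_lifting type_definition_fg2

lift_definition one_fg2 :: fg2 is "[]" by simp

lift_definition mul_fg2 :: "fg2 \<Rightarrow> fg2 \<Rightarrow> fg2" is mul_list
  by (rule reduced_mul_list)

lift_definition inv_fg2 :: "fg2 \<Rightarrow> fg2" is inv_list
  unfolding inv_list_def by (rule reduced_mul_list) simp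

lift_definition apow :: "int \<Rightarrow> fg2" is "\<lambda>k. cons_syl (False, k) []"
  by (rule reduced_cons_syl) simp

lift_definition bpow :: "int \<Rightarrow> fg2" is "\<lambda>k. cons_syl (True, k) []"
  by (rule reduced_cons_syl) simp

definition npow :: "fg2 \<Rightarrow> nat \<Rightarrow> fg2" where
  "npow g k = (mul_fg2 g ^^ k) one_fg2"

definition ipow :: "fg2 \<Rightarrow> int \<Rightarrow> fg2" where
  "ipow g k = (if k \<ge> 0 then npow g (nat k) else npow (inv_fg2 g) (nat (- k)))"

text \<open>The automorphism tau_n : a \<mapsto> a, b \<mapsto> a^n b, defined as the
  homomorphic extension to normal forms (a^{k1} b^{l1} ... \<mapsto> a^{k1} (a^n b)^{l1} ...).\<close>
definition syl_img :: "int \<Rightarrow> bool \<times> int \<Rightarrow> fg2" where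
  "syl_img n s = (case s of (False, k) \<Rightarrow> apow k
                           | (True, l) \<Rightarrow> ipow (mul_fg2 (apow n) (bpow 1)) l)"

definition tau :: "int \<Rightarrow> fg2 \<Rightarrow> fg2" where
  "tau n w = foldr (\<lambda>s acc. mul_fg2 (syl_img n s) acc) (Rep_fg2 w) one_fg2"

definition act_tau :: "int \<Rightarrow> (fg2 \<Rightarrow> real) \<Rightarrow> fg2 \<Rightarrow> real" where
  "act_tau n f = f \<circ> inv (tau n)"

text \<open>fA k stands for f_A(a^k), fB k for f_B(b^k).\<close>
definition alternating :: "(int \<Rightarrow> real) \<Rightarrow> bool" where
  "alternating h \<longleftrightarrow> (\<forall>k. h (- k) = - h k)"

definition split_qm :: "(int \<Rightarrow> real) \<Rightarrow> (int \<Rightarrow> real) \<Rightarrow> fg2 \<Rightarrow> real" where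
  "split_qm fA fB w = (\<Sum>(g,k)\<leftarrow>Rep_fg2 w. if g then fB k else fA k)"

definition homogenization :: "(fg2 \<Rightarrow> real) \<Rightarrow> fg2 \<Rightarrow> real" where
  "homogenization f g = lim (\<lambda>k::nat. f (npow g k) / real k)"

definition coboundary :: "(fg2 \<Rightarrow> real) \<Rightarrow> fg2 \<Rightarrow> fg2 \<Rightarrow> real" where
  "coboundary f g h = f g + f h - f (mul_fg2 g h)"

text \<open>omega_f = omega_f' in H^2_b(F_2,R): the bounded 2-cocycles differ by the
  coboundary of a bounded 1-cochain.\<close>
definition same_bounded_class :: "(fg2 \<Rightarrow> real) \<Rightarrow> (fg2 \<Rightarrow> real) \<Rightarrow> bool" where
  "same_bounded_class f f' \<longleftrightarrow>
     (\<exists>u :: fg2 \<Rightarrow> real. (\<exists>C. \<forall>x. \<bar>u x\<bar> \<le> C) \<and>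
        (\<forall>g h. coboundary f g h - coboundary f' g h = coboundary u g h))"

definition periodic :: "(int \<Rightarrow> real) \<Rightarrow> nat \<Rightarrow> bool" where
  "periodic h p \<longleftrightarrow> (\<forall>k. h (k + int p) = h k)"

end

theory Submission
  imports Defs
begin


lemma red_Rep: "reduced (Rep_fg2 x)"
  using Rep_fg2 by simp

lemma cons_zero[simp]: "cons_syl (g,0) ws = ws"
  by (cases ws rule: reduced.cases) auto

lemma cons_red: "reduced (s # ws) \<Longrightarrow> cons_syl s ws = s # ws"
  by (cases s; cases ws rule: reduced.cases) auto

lemma cons_comp: "reduced ws \<Longrightarrow> cons_syl (g,k) (cons_syl (g,l) ws) = cons_syl (g,k+l) ws"
  by (cases ws rule: reduced.cases) auto

lemma mul_list_Cons[simp]: "mul_list (x # xs) ys = cons_syl x (mul_list xs ys)"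
  by (simp add: mul_list_def)
lemma mul_list_Nil[simp]: "mul_list [] ys = ys"
  by (simp add: mul_list_def)
lemma mul_list_append: "mul_list (xs @ ys) zs = mul_list xs (mul_list ys zs)"
  by (simp add: mul_list_def)

lemma mul_cons:
  assumes "reduced ys" "reduced zs"
  shows "mul_list (cons_syl s ys) zs = cons_syl s (mul_list ys zs)"
proof -
  obtain g k where s: "s = (g,k)" by (cases s)
  have rz: "\<And>r. reduced r \<Longrightarrow> reduced (mul_list r zs)" using assms(2) by (simp add: reduced_mul_list)
  show ?thesis
  proof (cases ys)
    case Nil then show ?thesis using s by simp
  next
    case (Cons y r)
    obtain h l where y: "y = (h,l)" by (cases y)
    have rr: "reduced r" using assms(1) Cons reduced_tl by blast
    show ?thesis
    proof (cases "k = 0")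
      case True then show ?thesis using s by simp
    next
      case False
      show ?thesis
      proof (cases "g = h")
        case True
        have "cons_syl (g,k) (cons_syl (g,l) (mul_list r zs)) = cons_syl (g,k+l) (mul_list r zs)"
          using cons_comp rz[OF rr] by blast
        then show ?thesis using s Cons y True False by auto
      next
        case False
        then show ?thesis using s Cons y \<open>k \<noteq> 0\<close> by auto
      qed
    qed
  qed
qed

lemma mul_assoc_list:
  assumes "reduced ys" "reduced zs"
  shows "mul_list (mul_list xs ys) zs = mul_list xs (mul_list ys zs)"
  using assms by (induction xs) (auto simp: mul_cons reduced_mul_list)

lemma mul_red_append: "reduced (xs @ ys) \<Longrightarrow> mul_list xs ys = xs @ ys"
proof (induction xs)
  case (Cons x xs)
  then have "reduced (xs @ ys)" using reduced_tl by auto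
  with Cons show ?case by (simp add: cons_red)
qed simp

lemma mul_nil_red: "reduced xs \<Longrightarrow> mul_list xs [] = xs"
  using mul_red_append[of xs "[]"] by simp

definition negs :: "bool \<times> int \<Rightarrow> bool \<times> int" where "negs = (\<lambda>(g,k). (g,-k))"

lemma cancel_list: "reduced zs \<Longrightarrow> mul_list (rev (map negs ys)) (mul_list ys zs) = zs"
proof (induction ys)
  case (Cons y ys)
  obtain g k where y: "y = (g,k)" by (cases y)
  have r: "reduced (mul_list ys zs)" using Cons reduced_mul_list by blast
  have "mul_list (rev (map negs (y # ys))) (mul_list (y#ys) zs)
     = mul_list (rev (map negs ys)) (cons_syl (g,-k) (cons_syl (g,k) (mul_list ys zs)))"
    by (simp add: mul_list_append y negs_def)
  also have "\<dots> = mul_list (rev (map negs ys)) (mul_list ys zs)"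
    using cons_comp[OF r] by simp
  finally show ?case using Cons by simp
qed simp

lemma negs_negs[simp]: "negs (negs x) = x" by (cases x) (simp add: negs_def)
lemma negs_comp[simp]: "negs \<circ> negs = id" by (rule ext) simp
lemma map_negs_negs[simp]: "map negs (map negs xs) = xs" by (induction xs) auto

lemma inv_list_alt: "inv_list xs = mul_list (rev (map negs xs)) []"
  by (simp add: inv_list_def negs_def)

lemma inv_left_list: "reduced xs \<Longrightarrow> mul_list (inv_list xs) xs = []"
  using cancel_list[of "[]" xs] mul_assoc_list[of "[]" xs "rev (map negs xs)"]
  by (simp add: inv_list_alt mul_nil_red)

lemma inv_right_list: "mul_list xs (inv_list xs) = []"
  using cancel_list[of "[]" "rev (map negs xs)"] by (simp add: inv_list_alt rev_map)


section \<open>Group laws on fg2\<close>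

lemma Rep_mul: "Rep_fg2 (mul_fg2 x y) = mul_list (Rep_fg2 x) (Rep_fg2 y)"
  by (simp add: mul_fg2.rep_eq)

lemma fg2_eqI: "Rep_fg2 x = Rep_fg2 y \<Longrightarrow> x = y"
  by (simp add: Rep_fg2_inject)

lemma mul_assoc: "mul_fg2 (mul_fg2 x y) z = mul_fg2 x (mul_fg2 y z)"
  by (rule fg2_eqI) (simp add: Rep_mul mul_assoc_list red_Rep)

lemma mul_one_left[simp]: "mul_fg2 one_fg2 x = x"
  by (rule fg2_eqI) (simp add: Rep_mul one_fg2.rep_eq)

lemma mul_one_right[simp]: "mul_fg2 x one_fg2 = x"
  by (rule fg2_eqI) (simp add: Rep_mul one_fg2.rep_eq mul_nil_red red_Rep)

lemma inv_left[simp]: "mul_fg2 (inv_fg2 x) x = one_fg2"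
  by (rule fg2_eqI) (simp add: Rep_mul one_fg2.rep_eq inv_fg2.rep_eq inv_left_list red_Rep)

lemma inv_right[simp]: "mul_fg2 x (inv_fg2 x) = one_fg2"
  by (rule fg2_eqI) (simp add: Rep_mul one_fg2.rep_eq inv_fg2.rep_eq inv_right_list)

lemma inv_unique: "mul_fg2 x y = one_fg2 \<Longrightarrow> y = inv_fg2 x"
proof -
  assume h: "mul_fg2 x y = one_fg2"
  have "y = mul_fg2 (mul_fg2 (inv_fg2 x) x) y" by simp
  also have "\<dots> = inv_fg2 x" by (simp only: mul_assoc h mul_one_right)
  finally show ?thesis .
qed

lemma inv_inv[simp]: "inv_fg2 (inv_fg2 x) = x"
  using inv_unique[of "inv_fg2 x" x] by simp

lemma mul_cancel_left[simp]: "mul_fg2 (inv_fg2 x) (mul_fg2 x y) = y"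
  by (simp flip: mul_assoc)
lemma mul_cancel_left2[simp]: "mul_fg2 x (mul_fg2 (inv_fg2 x) y) = y"
  by (simp flip: mul_assoc)

lemma npow_0[simp]: "npow g 0 = one_fg2" by (simp add: npow_def)
lemma npow_Suc: "npow g (Suc k) = mul_fg2 g (npow g k)" by (simp add: npow_def)

lemma npow_add: "npow g (p + q) = mul_fg2 (npow g p) (npow g q)"
  by (induction p) (simp_all add: npow_Suc mul_assoc)

lemma npow_Suc': "npow g (Suc k) = mul_fg2 (npow g k) g"
  using npow_add[of g k 1] by (simp add: npow_Suc)

lemma npow_inv: "npow (inv_fg2 g) k = inv_fg2 (npow g k)"
proof -
  have "mul_fg2 (npow g k) (npow (inv_fg2 g) k) = one_fg2"
  proof (induction k)
    case (Suc k)
    have "mul_fg2 (npow g (Suc k)) (npow (inv_fg2 g) (Suc k))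
        = mul_fg2 (npow g k) (mul_fg2 g (mul_fg2 (inv_fg2 g) (npow (inv_fg2 g) k)))"
      using npow_Suc'[of g k] npow_Suc[of "inv_fg2 g" k] by (simp add: mul_assoc)
    then show ?case using Suc by simp
  qed simp
  then show ?thesis by (rule inv_unique)
qed

lemma npow_mixed: "mul_fg2 (npow g p) (npow (inv_fg2 g) q) =
   (if q \<le> p then npow g (p - q) else npow (inv_fg2 g) (q - p))"
proof (induction q)
  case (Suc q)
  have "mul_fg2 (npow g p) (npow (inv_fg2 g) (Suc q)) =
        mul_fg2 (mul_fg2 (npow g p) (npow (inv_fg2 g) q)) (inv_fg2 g)"
    by (simp add: npow_Suc' mul_assoc)
  also have "\<dots> = (if Suc q \<le> p then npow g (p - Suc q) else npow (inv_fg2 g) (Suc q - p))"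
  proof (cases "q \<le> p")
    case True
    show ?thesis
    proof (cases "p - q")
      case 0
      then have "p = q" using True by simp
      then show ?thesis using Suc by (simp add: npow_Suc)
    next
      case (Suc r)
      then have "p - Suc q = r" by simp
      moreover have "Suc q \<le> p" using Suc by simp
      ultimately show ?thesis using True Suc \<open>mul_fg2 (npow g p) (npow (inv_fg2 g) q) = _\<close>
        by (simp add: npow_Suc' mul_assoc)
    qed
  next
    case False
    then have "Suc q - p = Suc (q - p)" by simp
    then show ?thesis using False Suc by (simp add: npow_Suc')
  qed
  finally show ?case .
qed simp

lemma npow_mixed2: "mul_fg2 (npow (inv_fg2 g) q) (npow g p) =
   (if q \<le> p then npow g (p - q) else npow (inv_fg2 g) (q - p))"
  using npow_mixed[of "inv_fg2 g" q p] npow_mixed[of g p q]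
  by (cases "q \<le> p"; cases "p \<le> q") (auto simp: le_antisym)

lemma npow_comm: "mul_fg2 (npow g p) (npow g q) = mul_fg2 (npow g q) (npow g p)"
  by (simp flip: npow_add add: add.commute)

lemma ipow_add: "ipow g (k + l) = mul_fg2 (ipow g k) (ipow g l)"
proof -
  consider "k \<ge> 0" "l \<ge> 0" | "k < 0" "l < 0" | "k \<ge> 0" "l < 0" | "k < 0" "l \<ge> 0" by linarith
  then show ?thesis
  proof cases
    case 1 then show ?thesis by (simp add: ipow_def nat_add_distrib npow_add)
  next
    case 2
    then have "nat (- (k + l)) = nat (-k) + nat (-l)" by simp
    then show ?thesis using 2 by (simp add: ipow_def npow_add)
  next
    case 3
    show ?thesis
    proof (cases "0 \<le> k + l")
      case True
      then have "nat (k+l) = nat k - nat (-l)" "nat (-l) \<le> nat k" using 3 by auto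
      then show ?thesis using 3 True by (simp add: ipow_def npow_mixed)
    next
      case False
      then have "nat (-(k+l)) = nat (-l) - nat k" "\<not> nat (-l) \<le> nat k" using 3 by auto
      then show ?thesis using 3 False by (simp add: ipow_def npow_mixed)
    qed
  next
    case 4
    show ?thesis
    proof (cases "0 \<le> k + l")
      case True
      then have "nat (k+l) = nat l - nat (-k)" "nat (-k) \<le> nat l" using 4 by auto
      then show ?thesis using 4 True by (simp add: ipow_def npow_mixed2)
    next
      case False
      then have "nat (-(k+l)) = nat (-k) - nat l" "\<not> nat (-k) \<le> nat l" using 4 by auto
      then show ?thesis using 4 False by (simp add: ipow_def npow_mixed2)
    qed
  qed
qed


section \<open>Homomorphisms and tau\<close>

definition evS :: "(bool \<times> int \<Rightarrow> fg2) \<Rightarrow> (bool \<times> int) list \<Rightarrow> fg2" where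
  "evS S xs = foldr (\<lambda>s acc. mul_fg2 (S s) acc) xs one_fg2"

lemma evS_Nil[simp]: "evS S [] = one_fg2" by (simp add: evS_def)
lemma evS_Cons[simp]: "evS S (x # xs) = mul_fg2 (S x) (evS S xs)" by (simp add: evS_def)

definition addS :: "(bool \<times> int \<Rightarrow> fg2) \<Rightarrow> bool" where
  "addS S \<longleftrightarrow> (\<forall>g k l. S (g, k + l) = mul_fg2 (S (g,k)) (S (g,l))) \<and> (\<forall>g. S (g,0) = one_fg2)"

lemma ev_cons_syl:
  assumes S: "addS S" and r: "reduced ys"
  shows "evS S (cons_syl s ys) = mul_fg2 (S s) (evS S ys)"
proof -
  obtain g k where s: "s = (g,k)" by (cases s)
  show ?thesis
  proof (cases ys)
    case Nil then show ?thesis using s S by (simp add: addS_def)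
  next
    case (Cons y r)
    obtain h l where y: "y = (h,l)" by (cases y)
    show ?thesis
    proof (cases "k = 0")
      case True then show ?thesis using s S by (simp add: addS_def)
    next
      case False
      show ?thesis
      proof (cases "g = h")
        case True
        have "S (g, k + l) = mul_fg2 (S (g,k)) (S (g,l))" using S by (simp add: addS_def)
        moreover have "S (g, 0) = one_fg2" using S by (simp add: addS_def)
        ultimately have e: "mul_fg2 (S (g,k)) (mul_fg2 (S (g,l)) z) = (if k + l = 0 then z else mul_fg2 (S (g, k+l)) z)" for z
          by (auto simp flip: mul_assoc)
        show ?thesis using s Cons y True False e by auto
      next
        case False
        then show ?thesis using s Cons y \<open>k \<noteq> 0\<close> by auto
      qed
    qed
  qed
qed

lemma ev_mul_list:
  assumes S: "addS S" and r: "reduced ys"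
  shows "evS S (mul_list xs ys) = mul_fg2 (evS S xs) (evS S ys)"
  by (induction xs) (simp_all add: ev_cons_syl[OF S] reduced_mul_list[OF r] mul_assoc)

lemma Rep_apow: "Rep_fg2 (apow k) = cons_syl (False,k) []" by (simp add: apow.rep_eq)
lemma Rep_bpow: "Rep_fg2 (bpow k) = cons_syl (True,k) []" by (simp add: bpow.rep_eq)
lemma Rep_one[simp]: "Rep_fg2 one_fg2 = []" by (simp add: one_fg2.rep_eq)

lemma mul_single: "mul_list (cons_syl s []) ys = cons_syl s ys"
  by (cases s) auto

lemma apow_add: "apow (k + l) = mul_fg2 (apow k) (apow l)"
  by (rule fg2_eqI) (simp add: Rep_mul Rep_apow mul_single cons_comp)
lemma bpow_add: "bpow (k + l) = mul_fg2 (bpow k) (bpow l)"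
  by (rule fg2_eqI) (simp add: Rep_mul Rep_bpow mul_single cons_comp)
lemma apow_0[simp]: "apow 0 = one_fg2"
  by (rule fg2_eqI) (simp add: Rep_apow Rep_one)
lemma bpow_0[simp]: "bpow 0 = one_fg2"
  by (rule fg2_eqI) (simp add: Rep_bpow Rep_one)

lemma ipow_0[simp]: "ipow g 0 = one_fg2" by (simp add: ipow_def)
lemma ipow_1[simp]: "ipow g 1 = g" by (simp add: ipow_def npow_Suc)

definition cn :: "int \<Rightarrow> fg2" where "cn n = mul_fg2 (apow n) (bpow 1)"

lemma syl_img_F[simp]: "syl_img n (False, k) = apow k" by (simp add: syl_img_def)
lemma syl_img_T[simp]: "syl_img n (True, l) = ipow (cn n) l" by (simp add: syl_img_def cn_def)

lemma addS_syl_img: "addS (syl_img n)"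
  unfolding addS_def
proof (intro conjI allI)
  fix g k l show "syl_img n (g, k + l) = mul_fg2 (syl_img n (g, k)) (syl_img n (g, l))"
    by (cases g) (simp_all add: apow_add ipow_add)
next
  fix g show "syl_img n (g, 0) = one_fg2" by (cases g) simp_all
qed

lemma tau_ev: "tau n w = evS (syl_img n) (Rep_fg2 w)"
  by (simp add: tau_def evS_def)

lemma tau_mul: "tau n (mul_fg2 x y) = mul_fg2 (tau n x) (tau n y)"
  by (simp add: tau_ev Rep_mul ev_mul_list[OF addS_syl_img red_Rep])

definition ishom :: "(fg2 \<Rightarrow> fg2) \<Rightarrow> bool" where
  "ishom h \<longleftrightarrow> (\<forall>x y. h (mul_fg2 x y) = mul_fg2 (h x) (h y))"

lemma ishom_tau: "ishom (tau n)" by (simp add: ishom_def tau_mul)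

lemma hom_one: "ishom h \<Longrightarrow> h one_fg2 = one_fg2"
proof -
  assume h: "ishom h"
  have "h one_fg2 = mul_fg2 (h one_fg2) (h one_fg2)" using h unfolding ishom_def
    by (metis mul_one_left)
  then have "mul_fg2 (inv_fg2 (h one_fg2)) (h one_fg2) = mul_fg2 (inv_fg2 (h one_fg2)) (mul_fg2 (h one_fg2) (h one_fg2))"
    by simp
  then show ?thesis by simp
qed

lemma hom_inv: "ishom h \<Longrightarrow> h (inv_fg2 x) = inv_fg2 (h x)"
proof -
  assume h: "ishom h"
  have "mul_fg2 (h x) (h (inv_fg2 x)) = one_fg2"
    using h hom_one[OF h] unfolding ishom_def by (metis inv_right)
  then show ?thesis by (rule inv_unique)
qed

lemma hom_npow: "ishom h \<Longrightarrow> h (npow x k) = npow (h x) k"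
  by (induction k) (simp_all add: hom_one npow_Suc ishom_def)

lemma hom_ipow: "ishom h \<Longrightarrow> h (ipow x k) = ipow (h x) k"
  by (simp add: ipow_def hom_npow hom_inv)

lemma hom_evS: "ishom h \<Longrightarrow> h (evS S xs) = evS (h \<circ> S) xs"
  by (induction xs) (simp_all add: hom_one ishom_def)

lemma tau_apow[simp]: "tau n (apow k) = apow k"
  by (cases "k = 0") (simp_all add: tau_ev Rep_apow)

lemma tau_bpow[simp]: "tau n (bpow k) = ipow (cn n) k"
  by (cases "k = 0") (simp_all add: tau_ev Rep_bpow)

definition sylg :: "bool \<times> int \<Rightarrow> fg2" where "sylg = (\<lambda>(g,k). if g then bpow k else apow k)"

lemma Rep_sylg: "Rep_fg2 (sylg s) = cons_syl s []"
  by (cases s) (simp add: sylg_def Rep_apow Rep_bpow)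

lemma ev_sylg: "reduced ws \<Longrightarrow> evS sylg ws = Abs_fg2 ws"
proof (induction ws)
  case Nil then show ?case by (simp add: one_fg2_def)
next
  case (Cons s ws)
  then have rw: "reduced ws" using reduced_tl by blast
  have "Rep_fg2 (mul_fg2 (sylg s) (Abs_fg2 ws)) = s # ws"
    by (simp add: Rep_mul Rep_sylg Abs_fg2_inverse rw mul_single cons_red Cons.prems)
  then have "mul_fg2 (sylg s) (Abs_fg2 ws) = Abs_fg2 (s # ws)"
    by (metis Rep_fg2_inverse)
  then show ?case using Cons rw by simp
qed

lemma ev_sylg_Rep: "evS sylg (Rep_fg2 x) = x"
  by (simp add: ev_sylg red_Rep Rep_fg2_inverse)

lemma npow_bpow1: "npow (bpow 1) k = bpow (int k)"
  by (induction k) (simp_all add: npow_Suc bpow_add[symmetric] add.commute)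

lemma ipow_bpow1: "ipow (bpow 1) l = bpow l"
proof (cases "l \<ge> 0")
  case True then show ?thesis by (simp add: ipow_def npow_bpow1)
next
  case False
  have "mul_fg2 (bpow (-l)) (bpow l) = one_fg2" by (simp flip: bpow_add)
  then have "bpow l = inv_fg2 (bpow (-l))" by (rule inv_unique)
  then show ?thesis using False by (simp add: ipow_def npow_inv npow_bpow1)
qed

lemma tau_tau: "tau (-n) (tau n x) = x"
proof -
  have "tau (-n) \<circ> syl_img n = sylg"
  proof (rule ext)
    fix s :: "bool \<times> int"
    obtain g k where s: "s = (g,k)" by (cases s)
    have "tau (-n) (cn n) = bpow 1"
      by (simp add: cn_def tau_mul flip: mul_assoc apow_add)
    then show "(tau (-n) \<circ> syl_img n) s = sylg s"
      using s by (cases g) (simp_all add: sylg_def hom_ipow[OF ishom_tau] ipow_bpow1)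
  qed
  then show ?thesis
    by (simp add: tau_ev[of n] hom_evS[OF ishom_tau] ev_sylg_Rep)
qed

lemma inv_tau: "inv (tau n) = tau (-n)"
  by (rule inv_equality) (use tau_tau[of n] tau_tau[of "-n"] in auto)

lemma act_tau_alt: "act_tau n f = f \<longleftrightarrow> (\<forall>x. f (tau n x) = f x)"
proof
  assume h: "act_tau n f = f"
  show "\<forall>x. f (tau n x) = f x"
  proof
    fix x
    have "act_tau n f (tau n x) = f (tau n x)" using h by simp
    then show "f (tau n x) = f x" by (simp add: act_tau_def inv_tau tau_tau)
  qed
next
  assume h: "\<forall>x. f (tau n x) = f x"
  show "act_tau n f = f"
  proof
    fix x
    show "act_tau n f x = f x"
      using h[rule_format, of "tau (-n) x"] tau_tau[of "-n" x] by (simp add: act_tau_def inv_tau)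
  qed
qed



definition sf :: "(int \<Rightarrow> real) \<Rightarrow> (int \<Rightarrow> real) \<Rightarrow> (bool \<times> int) list \<Rightarrow> real" where
  "sf fA fB xs = (\<Sum>(g,k)\<leftarrow>xs. if g then fB k else fA k)"

lemma sf_Nil[simp]: "sf fA fB [] = 0" by (simp add: sf_def)
lemma sf_Cons[simp]: "sf fA fB ((g,k) # xs) = (if g then fB k else fA k) + sf fA fB xs"
  by (simp add: sf_def)

lemma split_qm_sf: "split_qm fA fB w = sf fA fB (Rep_fg2 w)"
  by (simp add: split_qm_def sf_def)

lemma Rep_cn: "n \<noteq> 0 \<Longrightarrow> Rep_fg2 (cn n) = [(False,n),(True,1)]"
  by (simp add: cn_def Rep_mul Rep_apow Rep_bpow)

lemma Rep_inv_cn: "n \<noteq> 0 \<Longrightarrow> Rep_fg2 (inv_fg2 (cn n)) = [(True,-1),(False,-n)]"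
  by (simp add: inv_fg2.rep_eq Rep_cn inv_list_def)

lemma mul_npow_iter: "reduced R \<Longrightarrow> mul_list (Rep_fg2 (npow c j)) R = (mul_list (Rep_fg2 c) ^^ j) R"
proof (induction j)
  case (Suc j)
  have "Rep_fg2 (npow c (Suc j)) = mul_list (Rep_fg2 c) (Rep_fg2 (npow c j))"
    by (simp add: npow_Suc Rep_mul)
  then show ?case using Suc by (simp add: mul_assoc_list red_Rep)
qed simp

context
  fixes fA fB :: "int \<Rightarrow> real" and n :: int
  assumes n0: "n \<noteq> 0" and hB: "\<forall>k. fB k = 0" and hA: "\<forall>k. fA (k + n) = fA k"
    and h0: "fA 0 = 0" and alt: "\<forall>k. fA (-k) = - fA k"
begin

lemma fAn: "fA n = 0" using hA h0 by (metis add.left_neutral)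
lemma fAmn: "fA (-n) = 0" using fAn alt by simp
lemma fAm: "fA (k - n) = fA k" using hA[rule_format, of "k - n"] by simp

definition CP :: "(bool \<times> int) list \<Rightarrow> bool" where
  "CP R \<longleftrightarrow> R = [] \<or> (\<exists>k R'. R = (False,k) # R') \<or> (\<exists>p R'. p > 0 \<and> R = (True,p) # R')"

definition CQ :: "(bool \<times> int) list \<Rightarrow> bool" where
  "CQ R \<longleftrightarrow> R = [] \<or> (\<exists>p R'. R = (True,p) # R') \<or>
     (\<exists>k R'. R = (False,k) # R' \<and> (k = n \<longrightarrow> R' = [] \<or> (\<exists>q R''. q < 0 \<and> R' = (True,q) # R'')))"

abbreviation "Pl \<equiv> [(False,n),(True,1::int)]"
abbreviation "Ql \<equiv> [(True,-1::int),(False,-n)]"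

lemma Pstep: "CP R \<Longrightarrow> \<exists>p R'. p > 0 \<and> mul_list Pl R = (False,n) # (True,p) # R' \<and> sf fA fB (mul_list Pl R) = sf fA fB R"
  unfolding CP_def using n0 by (auto simp: hB fAn)

lemma Piter: "CP R \<Longrightarrow> j > 0 \<Longrightarrow> \<exists>p R'. p > 0 \<and> (mul_list Pl ^^ j) R = (False,n) # (True,p) # R' \<and> sf fA fB ((mul_list Pl ^^ j) R) = sf fA fB R"
proof (induction j)
  case (Suc j)
  show ?case
  proof (cases j)
    case 0 then show ?thesis using Pstep Suc by simp
  next
    case (Suc i)
    then obtain p R' where "p > 0" "(mul_list Pl ^^ j) R = (False,n) # (True,p) # R'"
      "sf fA fB ((mul_list Pl ^^ j) R) = sf fA fB R" using Suc.IH[OF Suc.prems(1)] Suc by blast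
    moreover have "CP ((mul_list Pl ^^ j) R)" using calculation by (simp add: CP_def)
    moreover have "(mul_list Pl ^^ Suc j) R = mul_list Pl ((mul_list Pl ^^ j) R)" by simp
    ultimately show ?thesis using Pstep[of "(mul_list Pl ^^ j) R"] by (simp del: mul_list_Cons funpow.simps)
  qed
qed simp

lemma Qstep: "CQ R \<Longrightarrow> \<exists>q R'. q < 0 \<and> mul_list Ql R = (True,q) # R' \<and> sf fA fB (mul_list Ql R) = sf fA fB R"
  unfolding CQ_def using n0 by (auto simp: hB fAmn fAm fAn)

lemma Qiter: "CQ R \<Longrightarrow> j > 0 \<Longrightarrow> \<exists>q R'. q < 0 \<and> (mul_list Ql ^^ j) R = (True,q) # R' \<and> sf fA fB ((mul_list Ql ^^ j) R) = sf fA fB R"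
proof (induction j)
  case (Suc j)
  show ?case
  proof (cases j)
    case 0 then show ?thesis using Qstep Suc by simp
  next
    case (Suc i)
    then obtain q R' where "q < 0" "(mul_list Ql ^^ j) R = (True,q) # R'"
      "sf fA fB ((mul_list Ql ^^ j) R) = sf fA fB R" using Suc.IH[OF Suc.prems(1)] Suc by blast
    moreover have "CQ ((mul_list Ql ^^ j) R)" using calculation by (simp add: CQ_def)
    moreover have "(mul_list Ql ^^ Suc j) R = mul_list Ql ((mul_list Ql ^^ j) R)" by simp
    ultimately show ?thesis using Qstep[of "(mul_list Ql ^^ j) R"] by (simp del: mul_list_Cons funpow.simps)
  qed
qed simp

definition Inv :: "(bool \<times> int) list \<Rightarrow> (bool \<times> int) list \<Rightarrow> bool" where
  "Inv ws R \<longleftrightarrow> sf fA fB R = sf fA fB ws \<and>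
     (case ws of [] \<Rightarrow> R = []
      | (g,l) # _ \<Rightarrow> (if g then (l > 0 \<longrightarrow> (\<exists>p R'. p > 0 \<and> R = (False,n) # (True,p) # R'))
                          \<and> (l < 0 \<longrightarrow> (\<exists>q R'. q < 0 \<and> R = (True,q) # R'))
                     else ((\<exists>k R'. R = (False,k) # R' \<and> (k = n \<longrightarrow> R' = [] \<or> (\<exists>q R''. q < 0 \<and> R' = (True,q) # R'')))
                           \<or> (\<exists>p R'. p > 0 \<and> R = (True,p) # R'))))"

lemma Rep_syl_img_T:
  assumes "reduced R"
  shows "mul_list (Rep_fg2 (syl_img n (True,l))) R =
     (if l \<ge> 0 then (mul_list Pl ^^ nat l) R else (mul_list Ql ^^ nat (-l)) R)"
  using assms by (simp add: ipow_def mul_npow_iter Rep_cn Rep_inv_cn n0 cn_def[symmetric])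

lemma Inv_main: "reduced ws \<Longrightarrow> Inv ws (Rep_fg2 (evS (syl_img n) ws))"
proof (induction ws)
  case Nil then show ?case by (simp add: Inv_def)
next
  case (Cons s ws)
  obtain g l where s: "s = (g,l)" by (cases s)
  have rw: "reduced ws" using Cons.prems reduced_tl by blast
  have l0: "l \<noteq> 0" using Cons.prems s by (cases ws rule: reduced.cases) auto
  have IH: "Inv ws (Rep_fg2 (evS (syl_img n) ws))" using Cons.IH rw .
  define R0 where "R0 = Rep_fg2 (evS (syl_img n) ws)"
  have rR0: "reduced R0" by (simp add: R0_def red_Rep)
  have Rs: "Rep_fg2 (evS (syl_img n) (s # ws)) = mul_list (Rep_fg2 (syl_img n s)) R0"
    by (simp add: Rep_mul R0_def)
  have IH': "Inv ws R0" using IH by (simp add: R0_def)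
  show ?case
  proof (cases g)
    case True
    have tail: "ws = [] \<or> (\<exists>k r. ws = (False,k) # r)"
      using Cons.prems s True by (cases ws rule: reduced.cases) auto
    have sR0: "sf fA fB R0 = sf fA fB ws" using IH' by (simp add: Inv_def)
    have CPR0: "CP R0" and CQR0: "CQ R0"
      using tail IH' unfolding Inv_def by (auto simp: CP_def CQ_def)
    show ?thesis
    proof (cases "l > 0")
      case True
      obtain p R' where "p > 0" "(mul_list Pl ^^ nat l) R0 = (False,n) # (True,p) # R'"
        "sf fA fB ((mul_list Pl ^^ nat l) R0) = sf fA fB R0"
        using Piter[OF CPR0, of "nat l"] True by auto
      then show ?thesis using Rs Rep_syl_img_T[OF rR0, of l] True \<open>g\<close> s sR0
        unfolding Inv_def by (auto simp: hB fAn)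
    next
      case False
      then have "l < 0" using l0 by simp
      obtain q R' where "q < 0" "(mul_list Ql ^^ nat (-l)) R0 = (True,q) # R'"
        "sf fA fB ((mul_list Ql ^^ nat (-l)) R0) = sf fA fB R0"
        using Qiter[OF CQR0, of "nat (-l)"] \<open>l < 0\<close> by auto
      then show ?thesis using Rs Rep_syl_img_T[OF rR0, of l] \<open>l < 0\<close> \<open>g\<close> s sR0
        unfolding Inv_def by (auto simp: hB fAn)
    qed
  next
    case False
    have tail: "ws = [] \<or> (\<exists>k r. ws = (True,k) # r)"
      using Cons.prems s False by (cases ws rule: reduced.cases) auto
    have RsF: "Rep_fg2 (evS (syl_img n) (s # ws)) = cons_syl (False,l) R0"
      using Rs s False by (simp add: Rep_apow mul_single)
    have sR0: "sf fA fB R0 = sf fA fB ws" using IH' by (simp add: Inv_def)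
    show ?thesis
    proof (cases ws)
      case Nil
      then have "R0 = []" using IH' by (simp add: Inv_def)
      then show ?thesis using RsF s False l0 Nil by (simp add: Inv_def)
    next
      case (Cons w r)
      then obtain m where w: "w = (True,m)" using tail by auto
      have m0: "m \<noteq> 0" using Cons w \<open>reduced (s # ws)\<close> s by (cases r rule: reduced.cases) auto
      show ?thesis
      proof (cases "m > 0")
        case True
        then obtain p R' where R0: "p > 0" "R0 = (False,n) # (True,p) # R'"
          using IH' Cons w by (auto simp: Inv_def)
        show ?thesis
        proof (cases "l + n = 0")
          case True
          then have "l = -n" by simp
          then show ?thesis using RsF R0 s False sR0 n0 unfolding Inv_def by (auto simp: fAmn fAn hB)
        next
          case False
          have "fA (l + n) = fA l" using hA by simp
          then show ?thesis using RsF R0 s \<open>\<not> g\<close> sR0 False l0 unfolding Inv_def by (auto simp: fAn hB)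
        qed
      next
        case False
        then have "m < 0" using m0 by simp
        then obtain q R' where R0: "q < 0" "R0 = (True,q) # R'"
          using IH' Cons w by (auto simp: Inv_def)
        then show ?thesis using RsF s \<open>\<not> g\<close> sR0 l0 by (auto simp: Inv_def)
      qed
    qed
  qed
qed

lemma f_tau_inv: "split_qm fA fB (tau n x) = split_qm fA fB x"
proof -
  have "Inv (Rep_fg2 x) (Rep_fg2 (tau n x))" using Inv_main[OF red_Rep] by (simp add: tau_ev)
  then show ?thesis by (simp add: split_qm_sf Inv_def)
qed

end


lemma reduced_append:
  "reduced (xs @ ys) \<longleftrightarrow> reduced xs \<and> reduced ys \<and> (xs \<noteq> [] \<longrightarrow> ys \<noteq> [] \<longrightarrow> fst (last xs) \<noteq> fst (hd ys))"
proof (induction xs rule: reduced.induct)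
  case 1 then show ?case by simp
next
  case (2 g k) then show ?case by (cases ys rule: reduced.cases) auto
next
  case (3 g k h l r) then show ?case by auto
qed

lemma reduced_concat_rep:
  assumes "reduced (P @ P)" "P \<noteq> []"
  shows "reduced (concat (replicate m P))"
proof (induction m)
  case (Suc m)
  have rP: "reduced P" using assms reduced_append by blast
  have j: "fst (last P) \<noteq> fst (hd P)" using assms reduced_append by blast
  show ?case
  proof (cases m)
    case 0 then show ?thesis using rP by simp
  next
    case (Suc i)
    have "hd (concat (replicate m P)) = hd P" using Suc assms(2) by simp
    moreover have "concat (replicate m P) \<noteq> []" using Suc assms(2) by simp
    ultimately show ?thesis using Suc.IH rP j reduced_append[of P "concat (replicate m P)"] by simp
  qed
qed simp

lemma Rep_npow_rep:
  assumes "Rep_fg2 c = P" "reduced (P @ P)" "P \<noteq> []"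
  shows "Rep_fg2 (npow c m) = concat (replicate m P)"
proof (induction m)
  case (Suc m)
  have "Rep_fg2 (npow c (Suc m)) = mul_list P (concat (replicate m P))"
    by (simp add: npow_Suc Rep_mul Suc assms(1))
  also have "\<dots> = P @ concat (replicate m P)"
    using reduced_concat_rep[OF assms(2,3), of "Suc m"] by (simp add: mul_red_append)
  finally show ?case by simp
qed simp

lemma sf_append: "sf fA fB (xs @ ys) = sf fA fB xs + sf fA fB ys"
  by (simp add: sf_def)

lemma sf_concat_rep: "sf fA fB (concat (replicate m P)) = real m * sf fA fB P"
  by (induction m) (simp_all add: sf_append algebra_simps)

lemma null_times:
  fixes x C :: real
  assumes "\<forall>m::nat. \<bar>real m * x\<bar> \<le> C"
  shows "x = 0"
proof (rule ccontr)
  assume "x \<noteq> 0"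
  then have "\<bar>x\<bar> > 0" by simp
  obtain m :: nat where "C / \<bar>x\<bar> < real m" using reals_Archimedean2 by blast
  then have "C < real m * \<bar>x\<bar>" using \<open>\<bar>x\<bar> > 0\<close> by (simp add: field_simps)
  then show False using assms[rule_format, of m] by (simp add: abs_mult)
qed

lemma lim_slope:
  fixes F :: "nat \<Rightarrow> real"
  assumes "\<forall>m. \<bar>F m - real m * A\<bar> \<le> C"
  shows "lim (\<lambda>m. F m / real m) = A"
proof (rule limI)
  have C0: "C \<ge> 0" using assms by (meson abs_ge_zero order.trans)
  have "(\<lambda>m. (F m - real m * A) / real m) \<longlonglongrightarrow> 0"
  proof (rule tendsto_0_le[OF lim_const_over_n[of 1]])
    show "\<forall>\<^sub>F m in sequentially. norm ((F m - real m * A) / real m) \<le> norm (1 / real m) * C"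
      using assms by (auto simp: divide_simps)
  qed
  then have "(\<lambda>m. A + (F m - real m * A) / real m) \<longlonglongrightarrow> A + 0"
    by (intro tendsto_add tendsto_const)
  then have "(\<lambda>m. A + (F m - real m * A) / real m) \<longlonglongrightarrow> A" by simp
  moreover have "\<forall>\<^sub>F m in sequentially. A + (F m - real m * A) / real m = F m / real m"
    using eventually_gt_at_top[of 0] by eventually_elim (simp add: field_simps)
  ultimately show "(\<lambda>m. F m / real m) \<longlonglongrightarrow> A" by (rule Lim_transform_eventually)
qed


lemma f_apow: "fA 0 = 0 \<Longrightarrow> split_qm fA fB (apow j) = fA j"
  by (cases "j = 0") (simp_all add: split_qm_sf Rep_apow)
lemma f_bpow: "fB 0 = 0 \<Longrightarrow> split_qm fA fB (bpow j) = fB j"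
  by (cases "j = 0") (simp_all add: split_qm_sf Rep_bpow)

lemma npow_apow: "npow (apow k) m = apow (int m * k)"
  by (induction m) (simp_all add: npow_Suc apow_add[symmetric] algebra_simps)

lemma Rep_ab: "k \<noteq> 0 \<Longrightarrow> l \<noteq> 0 \<Longrightarrow> Rep_fg2 (mul_fg2 (apow k) (bpow l)) = [(False,k),(True,l)]"
  by (simp add: Rep_mul Rep_apow Rep_bpow)

definition QH :: "(int \<Rightarrow> real) \<Rightarrow> (int \<Rightarrow> real) \<Rightarrow> int \<Rightarrow> (fg2 \<Rightarrow> real) \<Rightarrow> bool" where
  "QH fA fB n E \<longleftrightarrow> (\<forall>x y. E (mul_fg2 x y) = E x + E y) \<and>
    (\<forall>w A B. (\<exists>C. \<forall>m. \<bar>split_qm fA fB (npow w m) - real m * A\<bar> \<le> C) \<longrightarrow>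
             (\<exists>C. \<forall>m. \<bar>split_qm fA fB (npow (tau n w) m) - real m * B\<bar> \<le> C) \<longrightarrow> B - A = E w)"

lemma last_rep_Pl: "last (concat (replicate (Suc j) [(False,n),(True,1::int)])) = (True,1)"
  by (induction j) auto

lemma QH_imp:
  fixes fA fB :: "int \<Rightarrow> real" and n :: int
  assumes altA: "alternating fA" and altB: "alternating fB"
    and bdA: "\<exists>C. \<forall>k. \<bar>fA k\<bar> \<le> C" and bdB: "\<exists>C. \<forall>k. \<bar>fB k\<bar> \<le> C"
    and n0: "n \<noteq> 0" and Q: "QH fA fB n E"
  shows "(\<forall>k. fA (k + n) = fA k) \<and> (\<forall>k. fB k = 0)"
proof -
  have aA: "fA (-k) = - fA k" for k using altA by (simp add: alternating_def)
  have aB: "fB (-k) = - fB k" for k using altB by (simp add: alternating_def)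
  have fA0: "fA 0 = 0" using aA[of 0] by simp
  have fB0: "fB 0 = 0" using aB[of 0] by simp
  obtain CA where CA: "\<forall>k. \<bar>fA k\<bar> \<le> CA" using bdA by blast
  obtain CB where CB: "\<forall>k. \<bar>fB k\<bar> \<le> CB" using bdB by blast
  let ?f = "split_qm fA fB"
  have Ehom: "E (mul_fg2 x y) = E x + E y" for x y using Q by (simp add: QH_def)
  have QQ: "B - A = E w" if "\<forall>m. \<bar>?f (npow w m) - real m * A\<bar> \<le> C1"
      "\<forall>m. \<bar>?f (npow (tau n w) m) - real m * B\<bar> \<le> C2" for w A B C1 C2
    using Q that unfolding QH_def by blast
  have E1: "E one_fg2 = 0" using Ehom[of one_fg2 one_fg2] by simp
  have Enpow: "E (npow x m) = real m * E x" for x m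
    by (induction m) (simp_all add: E1 npow_Suc Ehom algebra_simps)
  have eA: "E (apow k) = 0" for k
  proof -
    have "0 - 0 = E (apow k)"
      by (rule QQ[of "apow k" 0 CA _ CA]) (simp_all add: npow_apow f_apow fA0 CA)
    then show ?thesis by simp
  qed
  define \<beta> where "\<beta> = E (bpow 1)"
  have eB: "E (bpow (int j)) = real j * \<beta>" for j
    using Enpow[of "bpow 1" j] by (simp add: npow_bpow1 \<beta>_def)
  have Rcn: "Rep_fg2 (npow (cn n) m) = concat (replicate m [(False,n),(True,1)])" for m
    by (rule Rep_npow_rep) (simp_all add: Rep_cn n0)
  have e3: "fA n + fB 1 = \<beta>"
  proof -
    have "(fA n + fB 1) - 0 = E (bpow 1)"
    proof (rule QQ[of "bpow 1" 0 CB _ 0])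
      show "\<forall>m. \<bar>?f (npow (bpow 1) m) - real m * 0\<bar> \<le> CB"
        by (simp add: npow_bpow1 f_bpow fB0 CB)
      show "\<forall>m. \<bar>?f (npow (tau n (bpow 1)) m) - real m * (fA n + fB 1)\<bar> \<le> 0"
        by (simp add: split_qm_sf Rcn sf_concat_rep)
    qed
    then show ?thesis by (simp add: \<beta>_def)
  qed
  have srcT1: "\<forall>m. \<bar>?f (npow (mul_fg2 (apow k) (bpow l)) m) - real m * (fA k + fB l)\<bar> \<le> 0"
    if "k \<noteq> 0" "l \<noteq> 0" for k l
  proof -
    have "Rep_fg2 (npow (mul_fg2 (apow k) (bpow l)) m) = concat (replicate m [(False,k),(True,l)])" for m
      by (rule Rep_npow_rep) (simp_all add: Rep_ab that)
    then show ?thesis by (simp add: split_qm_sf sf_concat_rep)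
  qed
  have Eab: "E (mul_fg2 (apow k) (bpow (int j))) = real j * \<beta>" for k j
    by (simp add: Ehom eA eB)
  have e2: "- (fA (-n) + fB 1) = \<beta>"
  proof -
    have td: "tau n (mul_fg2 (apow (-n)) (bpow 1)) = bpow 1"
      by (simp add: tau_mul cn_def flip: mul_assoc apow_add)
    have "0 - (fA (-n) + fB 1) = E (mul_fg2 (apow (-n)) (bpow 1))"
    proof (rule QQ[of _ _ 0 _ CB])
      show "\<forall>m. \<bar>?f (npow (mul_fg2 (apow (- n)) (bpow 1)) m) - real m * (fA (- n) + fB 1)\<bar> \<le> 0"
        using srcT1[of "-n" 1] n0 by simp
      show "\<forall>m. \<bar>?f (npow (tau n (mul_fg2 (apow (- n)) (bpow 1))) m) - real m * 0\<bar> \<le> CB"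
        by (simp add: td npow_bpow1 f_bpow fB0 CB)
    qed
    then show ?thesis using Eab[of "-n" 1] by simp
  qed
  have fB1: "fB 1 = 0" and beta: "\<beta> = fA n" using e2 e3 aA[of n] by auto
  have e1: "fA (k + n) + fB 1 + real j * (fA n + fB 1) - (fA k + fB (int (Suc j))) = real (Suc j) * \<beta>"
    if k0: "k \<noteq> 0" and kn: "k + n \<noteq> 0" for k j
  proof -
    define P' where "P' = (False, k + n) # (True, 1) # concat (replicate j [(False,n),(True,1)])"
    have tc: "Rep_fg2 (tau n (mul_fg2 (apow k) (bpow (int (Suc j))))) = P'"
    proof -
      have "Rep_fg2 (ipow (cn n) (int (Suc j))) = concat (replicate (Suc j) [(False,n),(True,1)])"
        by (simp add: ipow_def Rcn del: of_nat_Suc)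
      then show ?thesis using k0 kn
        by (simp add: tau_mul Rep_mul Rep_apow P'_def del: replicate.simps(2) of_nat_Suc)
          (simp add: mul_single)
    qed
    have rP': "reduced P'" using tc red_Rep by metis
    have lP': "last P' = (True,1)"
      using last_rep_Pl[of "j - 1"] by (cases j) (simp_all add: P'_def)
    have hP: "hd P' = (False, k+n)" and ne: "P' \<noteq> []" by (simp_all add: P'_def)
    then have rr: "reduced (P' @ P')" using rP' lP' reduced_append[of P' P'] by simp
    have Rp: "Rep_fg2 (npow (tau n (mul_fg2 (apow k) (bpow (int (Suc j))))) m) = concat (replicate m P')" for m
      by (rule Rep_npow_rep[OF tc rr ne])
    have sP': "sf fA fB P' = fA (k + n) + fB 1 + real j * (fA n + fB 1)"
      by (simp add: P'_def sf_concat_rep)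
    have "(fA (k + n) + fB 1 + real j * (fA n + fB 1)) - (fA k + fB (int (Suc j))) = E (mul_fg2 (apow k) (bpow (int (Suc j))))"
    proof (rule QQ[of _ _ 0 _ 0])
      show "\<forall>m. \<bar>?f (npow (mul_fg2 (apow k) (bpow (int (Suc j)))) m) - real m * (fA k + fB (int (Suc j)))\<bar> \<le> 0"
        using srcT1[of k "int (Suc j)"] k0 by simp
      show "\<forall>m. \<bar>?f (npow (tau n (mul_fg2 (apow k) (bpow (int (Suc j))))) m) - real m * (fA (k + n) + fB 1 + real j * (fA n + fB 1))\<bar> \<le> 0"
        by (simp add: split_qm_sf Rp sf_concat_rep sP' del: of_nat_Suc)
    qed
    then show ?thesis using Eab[of k "Suc j"] by simp
  qed
  have add1: "fA (k + n) = fA k + fA n" if "k \<noteq> 0" "k + n \<noteq> 0" for k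
    using e1[OF that, of 0] fB1 beta by simp
  have mult: "fA (int (Suc i) * n) = real (Suc i) * fA n" for i
  proof (induction i)
    case (Suc i)
    have "int (Suc (Suc i)) * n = int (Suc i) * n + n" by (simp add: algebra_simps)
    moreover have "int (Suc i) * n \<noteq> 0" using n0 by (simp del: of_nat_Suc)
    moreover have "int (Suc i) * n + n \<noteq> 0"
      using \<open>int (Suc (Suc i)) * n = int (Suc i) * n + n\<close>[symmetric] n0 by (simp del: of_nat_Suc)
    ultimately show ?case using add1[of "int (Suc i) * n"] Suc by (simp add: algebra_simps)
  qed simp
  have fAn: "fA n = 0"
  proof (rule null_times[of _ CA], rule allI)
    fix m :: nat
    show "\<bar>real m * fA n\<bar> \<le> CA"
    proof (cases m)
      case 0 then show ?thesis using CA[rule_format, of 0] by simp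
    next
      case (Suc i) then show ?thesis using mult[of i] CA[rule_format, of "int (Suc i) * n"] by (simp del: of_nat_Suc)
    qed
  qed
  have perA: "fA (k + n) = fA k" for k
  proof -
    consider "k = 0" | "k = -n" | "k \<noteq> 0" "k + n \<noteq> 0" by force
    then show ?thesis
    proof cases
      case 1 then show ?thesis using fAn fA0 by simp
    next
      case 2 then show ?thesis using fAn fA0 aA[of n] by simp
    next
      case 3 then show ?thesis using add1 fAn by simp
    qed
  qed
  have Bpos: "fB (int (Suc j)) = 0" for j
  proof -
    have "n \<noteq> 0" "n + n \<noteq> 0" using n0 by simp_all
    from e1[OF this, of j] show ?thesis using fB1 beta fAn perA[of n] by (simp add: algebra_simps)
  qed
  have "fB k = 0" for k
  proof -
    consider "k = 0" | "k > 0" | "k < 0" by force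
    then show ?thesis
    proof cases
      case 1 then show ?thesis using fB0 by simp
    next
      case 2 then have "k = int (Suc (nat k - 1))" by simp
      then obtain j where "k = int (Suc j)" by blast
      then show ?thesis using Bpos by simp
    next
      case 3 then have "-k = int (Suc (nat (-k) - 1))" by simp
      then obtain j where "-k = int (Suc j)" by blast
      then have "k = - int (Suc j)" by simp
      then show ?thesis using Bpos[of j] aB[of "int (Suc j)"] by (simp del: of_nat_Suc)
    qed
  qed
  then show ?thesis using perA by blast
qed



lemma hom_npow_real: "(\<forall>x y. E (mul_fg2 x y) = E x + E y) \<Longrightarrow> E (npow x m) = real m * E x"
proof -
  assume h: "\<forall>x y. E (mul_fg2 x y) = E x + E y"
  have E1: "E one_fg2 = 0" using h[rule_format, of one_fg2 one_fg2] by simp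
  show ?thesis by (induction m) (simp_all add: E1 npow_Suc h algebra_simps)
qed

lemma per_int:
  fixes h :: "int \<Rightarrow> real" and p k j :: int
  shows "(\<forall>k. h (k + p) = h k) \<Longrightarrow> h (k + p * j) = h k"
proof (induction j rule: int_induct[where k=0])
  case base then show ?case by simp
next
  case (step1 i)
  have "h (k + p * (i + 1)) = h (k + p * i + p)" by (simp add: algebra_simps)
  then show ?case using step1 by simp
next
  case (step2 i)
  have "h (k + p * (i - 1) + p) = h (k + p * i)" by (simp add: algebra_simps)
  then show ?case using step2 by metis
qed

lemma sf_zero: "(\<forall>k. fA k = 0) \<Longrightarrow> (\<forall>k. fB k = 0) \<Longrightarrow> sf fA fB xs = 0"
  by (induction xs) (auto simp: sf_def)

lemma per_to: "periodic h (nat \<bar>n\<bar>) \<Longrightarrow> h (k + n) = h k"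
proof -
  assume p: "periodic h (nat \<bar>n\<bar>)"
  show ?thesis
  proof (cases "n \<ge> 0")
    case True then show ?thesis using p by (simp add: periodic_def)
  next
    case False
    have "int (nat \<bar>n\<bar>) = - n" using False by simp
    moreover have "h (k + n + int (nat \<bar>n\<bar>)) = h (k + n)" using p unfolding periodic_def by blast
    ultimately show ?thesis using False by simp
  qed
qed

lemma to_per: "(\<forall>k. h (k + n) = h k) \<Longrightarrow> periodic h (nat \<bar>n\<bar>)"
proof -
  assume p: "\<forall>k. h (k + n) = h k"
  show ?thesis unfolding periodic_def
  proof
    fix k
    show "h (k + int (nat \<bar>n\<bar>)) = h k"
    proof (cases "n \<ge> 0")
      case True then show ?thesis using p by simp
    next
      case False
      then show ?thesis using p[rule_format, of "k - n"] by simp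
    qed
  qed
qed

theorem theorem3p20:
  fixes fA fB :: "int \<Rightarrow> real" and n :: int
  assumes altA: "alternating fA" and altB: "alternating fB"
    and bdA: "\<exists>C. \<forall>k. \<bar>fA k\<bar> \<le> C" and bdB: "\<exists>C. \<forall>k. \<bar>fB k\<bar> \<le> C"
    and n0: "n \<noteq> 0"
  defines "f \<equiv> split_qm fA fB"
  shows "(act_tau n f = f \<longleftrightarrow> act_tau n (homogenization f) = homogenization f)
       \<and> (act_tau n (homogenization f) = homogenization f \<longleftrightarrow> same_bounded_class (act_tau n f) f)
       \<and> (same_bounded_class (act_tau n f) f \<longleftrightarrow> periodic fA (nat \<bar>n\<bar>) \<and> (\<forall>k. fB k = 0))
       \<and> (\<bar>n\<bar> \<le> 2 \<longrightarrow> act_tau n f = f \<longrightarrow> f = (\<lambda>_. 0))"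
proof -
  have aA: "\<forall>k. fA (-k) = - fA k" using altA by (simp add: alternating_def)
  have fA0: "fA 0 = 0" using aA[rule_format, of 0] by simp
  let ?P1 = "act_tau n f = f"
  let ?P2 = "act_tau n (homogenization f) = homogenization f"
  let ?P3 = "same_bounded_class (act_tau n f) f"
  let ?P4 = "periodic fA (nat \<bar>n\<bar>) \<and> (\<forall>k. fB k = 0)"
  have h41: "?P4 \<Longrightarrow> ?P1"
  proof -
    assume p4: ?P4
    have "\<forall>k. fA (k + n) = fA k" using p4 per_to by blast
    then have "\<forall>x. f (tau n x) = f x"
      using f_tau_inv[OF n0 _ _ fA0 aA] p4 by (simp add: f_def)
    then show ?P1 by (simp add: act_tau_alt)
  qed
  have h12: "?P1 \<Longrightarrow> ?P2"
  proof -
    assume ?P1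
    then have inv: "\<forall>x. f (tau n x) = f x" by (simp add: act_tau_alt)
    have "homogenization f (tau n x) = homogenization f x" for x
      by (simp add: homogenization_def hom_npow[OF ishom_tau, symmetric] inv)
    then show ?P2 by (simp add: act_tau_alt)
  qed
  have h13: "?P1 \<Longrightarrow> ?P3"
  proof -
    assume ?P1
    then show ?P3 unfolding same_bounded_class_def
      by (intro exI[of _ "\<lambda>_. 0"] conjI exI[of _ 0]) (simp_all add: coboundary_def)
  qed
  have hQ4: "QH fA fB n E \<Longrightarrow> ?P4" for E
  proof -
    assume "QH fA fB n E"
    from QH_imp[OF altA altB bdA bdB n0 this] show ?P4 using to_per by blast
  qed
  have h24: "?P2 \<Longrightarrow> ?P4"
  proof -
    assume ?P2
    then have inv: "\<forall>x. homogenization f (tau n x) = homogenization f x" by (simp add: act_tau_alt)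
    have "QH fA fB n (\<lambda>_. 0)"
      unfolding QH_def
    proof (intro conjI allI impI)
      fix w A B
      assume "\<exists>C. \<forall>m. \<bar>split_qm fA fB (npow w m) - real m * A\<bar> \<le> C"
      then obtain C1 where C1: "\<forall>m. \<bar>f (npow w m) - real m * A\<bar> \<le> C1" by (auto simp: f_def)
      assume "\<exists>C. \<forall>m. \<bar>split_qm fA fB (npow (tau n w) m) - real m * B\<bar> \<le> C"
      then obtain C2 where C2: "\<forall>m. \<bar>f (npow (tau n w) m) - real m * B\<bar> \<le> C2" by (auto simp: f_def)
      have "homogenization f w = A" unfolding homogenization_def by (rule lim_slope[OF C1])
      moreover have "homogenization f (tau n w) = B" unfolding homogenization_def by (rule lim_slope[OF C2])
      ultimately show "B - A = 0" using inv by simp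
    qed simp
    then show ?P4 by (rule hQ4)
  qed
  have h34: "?P3 \<Longrightarrow> ?P4"
  proof -
    assume ?P3
    then obtain u C0 where ub: "\<forall>x. \<bar>u x\<bar> \<le> C0"
      and cob: "\<forall>g h. coboundary (act_tau n f) g h - coboundary f g h = coboundary u g h"
      unfolding same_bounded_class_def by blast
    define D where "D x = act_tau n f x - f x - u x" for x
    have Dh: "D (mul_fg2 g h) = D g + D h" for g h
      using cob[rule_format, of g h] by (simp add: D_def coboundary_def algebra_simps)
    define E where "E y = - D (tau n y)" for y
    have Eh: "\<forall>x y. E (mul_fg2 x y) = E x + E y" by (simp add: E_def tau_mul Dh)
    have key: "f (tau n y) - f y = E y - u (tau n y)" for y
      by (simp add: E_def D_def act_tau_def inv_tau tau_tau)
    have "QH fA fB n E"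
      unfolding QH_def
    proof (intro conjI allI impI)
      show "E (mul_fg2 x y) = E x + E y" for x y using Eh by blast
    next
      fix w A B
      assume "\<exists>C. \<forall>m. \<bar>split_qm fA fB (npow w m) - real m * A\<bar> \<le> C"
      then obtain C1 where C1: "\<forall>m. \<bar>f (npow w m) - real m * A\<bar> \<le> C1" by (auto simp: f_def)
      assume "\<exists>C. \<forall>m. \<bar>split_qm fA fB (npow (tau n w) m) - real m * B\<bar> \<le> C"
      then obtain C2 where C2: "\<forall>m. \<bar>f (npow (tau n w) m) - real m * B\<bar> \<le> C2" by (auto simp: f_def)
      have "B - A - E w = 0"
      proof (rule null_times[of _ "C1 + C2 + C0"], rule allI)
        fix m
        have k: "f (npow (tau n w) m) - f (npow w m) = real m * E w - u (tau n (npow w m))"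
          using key[of "npow w m"] hom_npow_real[OF Eh, of w m]
          by (simp add: hom_npow[OF ishom_tau])
        have "real m * (B - A - E w) = (real m * B - f (npow (tau n w) m)) - (real m * A - f (npow w m)) - u (tau n (npow w m))"
          using k by (simp add: algebra_simps)
        then show "\<bar>real m * (B - A - E w)\<bar> \<le> C1 + C2 + C0"
          using C1[rule_format, of m] C2[rule_format, of m] ub[rule_format, of "tau n (npow w m)"]
          by linarith
      qed
      then show "B - A = E w" by simp
    qed
    then show ?P4 by (rule hQ4)
  qed
  have last: "\<bar>n\<bar> \<le> 2 \<longrightarrow> ?P1 \<longrightarrow> f = (\<lambda>_. 0)"
  proof (intro impI)
    assume n2: "\<bar>n\<bar> \<le> 2" and p1: ?P1
    have p4: ?P4 using h34[OF h13[OF p1]] .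
    have pn: "\<forall>k. fA (k + n) = fA k" using p4 per_to by blast
    have p2: "\<forall>k. fA (k + 2) = fA k"
    proof
      fix k
      consider "n = 1" | "n = -1" | "n = 2" | "n = -2" using n2 n0 by linarith
      then show "fA (k + 2) = fA k"
      proof cases
        case 1 then show ?thesis using pn[rule_format, of k] pn[rule_format, of "k+1"] by (simp add: add.assoc)
      next
        case 2 then show ?thesis using pn[rule_format, of "k+2"] pn[rule_format, of "k+1"] by (simp add: add.commute)
      next
        case 3 then show ?thesis using pn by simp
      next
        case 4 then show ?thesis using pn[rule_format, of "k+2"] by simp
      qed
    qed
    have f1: "fA 1 = 0" using p2[rule_format, of "-1"] aA[rule_format, of 1] by simp
    have zA: "\<forall>k. fA k = 0"
    proof
      fix k
      have "fA (k mod 2 + 2 * (k div 2)) = fA (k mod 2)" by (rule per_int[OF p2])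
      then have "fA k = fA (k mod 2)" by simp
      moreover have "k mod 2 = 0 \<or> k mod 2 = 1" by auto
      ultimately show "fA k = 0" using f1 fA0 by auto
    qed
    show "f = (\<lambda>_. 0)"
      by (rule ext) (simp add: f_def split_qm_sf sf_zero zA p4)
  qed
  show ?thesis using h41 h12 h13 h24 h34 last by blast
qed



end
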